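(* Let $C\in C^1(I;\mathbb R^n)$ satisfy $|\partial_\theta C(\theta,v)|=l(v)$ for all $(\theta,v)$, where $l:[0,1]\to(0,\infty)$ is continuous, and set $f(\theta,v)=\langle T(\theta,v),\partial_vC(\theta,v)\rangle$. For $\varphi\in C^1([0,1];\mathbb R)$ let $\widetilde C_\varphi(\theta,v)=C(\theta+\varphi(v),v)$. Then $$\inf_{\varphi}\int_I|\pi_{\widetilde T}\,\partial_v\widetilde C_\varphi|^2\,d\theta\,dv=\int_0^1\int_{S^1}\Big(f(\theta,v)-\frac1{2\pi}\int_{S^1}f(s,v)\,ds\Big)^2d\theta\,dv,$$ where $\widetilde T$ denotes the unit tangent of $\widetilde C_\varphi$.
   Context: $S^1=\mathbb R/2\pi\mathbb Z$, $I=S^1\times[0,1]$; $T=\partial_\theta C/|\partial_\theta C|$; $\pi_T w=\langle w,T\rangle T$. *)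

theory Defs
  imports "HOL-Analysis.Analysis"
begin

text \<open>Curves on the cylinder I = S^1 x [0,1], S^1 = R / 2 pi Z, represented by
  functions of two real variables that are 2 pi-periodic in the first one.\<close>

definition dtheta :: "(real \<Rightarrow> real \<Rightarrow> 'a::real_normed_vector) \<Rightarrow> real \<Rightarrow> real \<Rightarrow> 'a" where
  "dtheta F \<theta> v = vector_derivative (\<lambda>s. F s v) (at \<theta>)"

definition dv :: "(real \<Rightarrow> real \<Rightarrow> 'a::real_normed_vector) \<Rightarrow> real \<Rightarrow> real \<Rightarrow> 'a" where
  "dv F \<theta> v = vector_derivative (\<lambda>w. F \<theta> w) (at v within {0..1})"

definition unit_tangent :: "(real \<Rightarrow> real \<Rightarrow> 'a::real_normed_vector) \<Rightarrow> real \<Rightarrow> real \<Rightarrow> 'a" where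
  "unit_tangent F \<theta> v = (1 / norm (dtheta F \<theta> v)) *\<^sub>R dtheta F \<theta> v"

definition projT :: "'a::real_inner \<Rightarrow> 'a \<Rightarrow> 'a" where
  "projT T w = (inner w T) *\<^sub>R T"

definition C1_cyl :: "(real \<Rightarrow> real \<Rightarrow> 'a::real_normed_vector) \<Rightarrow> bool" where
  "C1_cyl C \<longleftrightarrow> (\<forall>\<theta> v. C (\<theta> + 2 * pi) v = C \<theta> v) \<and>
     (\<exists>D. (\<forall>p \<in> UNIV \<times> {0..1}.
            ((\<lambda>q. C (fst q) (snd q)) has_derivative D p) (at p within UNIV \<times> {0..1})) \<and>
          continuous_on (UNIV \<times> {0..1}) (\<lambda>p. D p (1, 0)) \<and>
          continuous_on (UNIV \<times> {0..1}) (\<lambda>p. D p (0, 1)))"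

definition C1_interval :: "(real \<Rightarrow> real) \<Rightarrow> bool" where
  "C1_interval \<phi> \<longleftrightarrow> (\<exists>\<phi>'. (\<forall>v \<in> {0..1}. (\<phi> has_real_derivative \<phi>' v) (at v within {0..1}))
                          \<and> continuous_on {0..1} \<phi>')"

end

theory Submission imports Defs begin
lemma shift_integral:
  fixes h :: "real \<Rightarrow> real"
  assumes hc: "continuous_on UNIV h" and hp: "\<And>x. h (x + 2*pi) = h x"
  shows "integral {0..2*pi} (\<lambda>t. h (t + c)) = integral {0..2*pi} h"
proof -
  define R where "R = \<bar>c\<bar> + 2*pi + 1"
  define F where "F = (\<lambda>x. integral {-R..x} h)"
  have FD: "(F has_real_derivative h x) (at x)" if "-R < x" "x < R" for x
  proof -
    have "(F has_real_derivative h x) (at x within {-R..R})"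
      unfolding F_def using that
      by (intro integral_has_real_derivative continuous_on_subset[OF hc]) auto
    moreover have "x \<in> interior {-R..R}" using that by auto
    ultimately show ?thesis using at_within_interior by metis
  qed
  have I: "integral {0..2*pi} (\<lambda>t. h (t + d)) = F (d + 2*pi) - F d" if "\<bar>d\<bar> \<le> \<bar>c\<bar>" for d
  proof -
    have "((\<lambda>t. h (t + d)) has_integral (F (2*pi + d) - F (0 + d))) {0..2*pi}"
    proof (rule fundamental_theorem_of_calculus)
      fix x assume x: "x \<in> {0..2*pi}"
      have "(F has_real_derivative h (x + d)) (at (x + d))"
        using x that pi_gt_zero by (intro FD) (auto simp: R_def; insert pi_gt_zero; linarith)+
      then have "((\<lambda>t. F (t + d)) has_real_derivative h (x + d)) (at x)"
      proof -
        have "((\<lambda>t. t + d) has_real_derivative 1) (at x)" by (auto intro!: derivative_eq_intros)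
        from DERIV_chain2[OF \<open>(F has_real_derivative h (x + d)) (at (x + d))\<close> this] show ?thesis by simp
      qed
      then show "((\<lambda>t. F (t + d)) has_vector_derivative h (x + d)) (at x within {0..2*pi})"
        by (simp add: has_real_derivative_iff_has_vector_derivative has_vector_derivative_at_within)
    qed simp
    then show ?thesis by (simp add: integral_unique add.commute)
  qed
  have "\<exists>k. \<forall>y\<in>{-\<bar>c\<bar>..\<bar>c\<bar>}. F (y + 2*pi) - F y = k"
  proof (rule has_field_derivative_zero_constant)
    fix y assume y: "y \<in> {-\<bar>c\<bar>..\<bar>c\<bar>}"
    have d1: "(F has_real_derivative h (y + 2*pi)) (at (y + 2*pi))"
      using y pi_gt_zero by (intro FD) (auto simp: R_def; insert pi_gt_zero; linarith)+
    have d2: "(F has_real_derivative h y) (at y)"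
      using y pi_gt_zero by (intro FD) (auto simp: R_def; insert pi_gt_zero; linarith)+
    have "((\<lambda>t. F (t + 2*pi)) has_real_derivative h (y + 2*pi)) (at y)"
    proof -
      have "((\<lambda>t. t + 2*pi) has_real_derivative 1) (at y)" by (auto intro!: derivative_eq_intros)
      from DERIV_chain2[OF d1 this] show ?thesis by simp
    qed
    then have "((\<lambda>t. F (t + 2*pi) - F t) has_real_derivative (h (y + 2*pi) - h y)) (at y)"
      using d2 by (intro DERIV_diff)
    then show "((\<lambda>t. F (t + 2*pi) - F t) has_real_derivative 0) (at y within {-\<bar>c\<bar>..\<bar>c\<bar>})"
      by (simp add: hp has_field_derivative_at_within)
  qed simp
  then obtain k where k: "\<And>y. y\<in>{-\<bar>c\<bar>..\<bar>c\<bar>} \<Longrightarrow> F (y + 2*pi) - F y = k" by blast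
  have "integral {0..2*pi} (\<lambda>t. h (t + c)) = k" using I[of c] k[of c] by (simp add: abs_le_iff) (metis abs_ge_self abs_ge_minus_self minus_le_iff)
  moreover have "integral {0..2*pi} (\<lambda>t. h (t + 0)) = k" using I[of 0] k[of 0] by auto
  ultimately show ?thesis by simp
qed

lemma vd_comp:
  fixes C :: "real \<Rightarrow> real \<Rightarrow> 'a::real_normed_vector"
  assumes D: "\<forall>p \<in> UNIV \<times> {0..1}. ((\<lambda>q. C (fst q) (snd q)) has_derivative D p) (at p within UNIV \<times> {0..1})"
  and v: "v \<in> {0..1}"
  and phi: "(\<phi> has_real_derivative \<phi>') (at v within {0..1})"
  shows "((\<lambda>w. C (\<theta> + \<phi> w) w) has_vector_derivative
     (\<phi>' *\<^sub>R D (\<theta> + \<phi> v, v) (1,0) + D (\<theta> + \<phi> v, v) (0,1))) (at v within {0..1})"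
proof -
  have f: "((\<lambda>w. (\<theta> + \<phi> w, w)) has_derivative (\<lambda>y. (\<phi>' * y, y))) (at v within {0..1})"
    using phi unfolding has_field_derivative_def
    by (auto intro!: derivative_eq_intros)
  have "((\<lambda>w. (\<lambda>q. C (fst q) (snd q)) ((\<lambda>w. (\<theta> + \<phi> w, w)) w)) has_derivative
     (\<lambda>y. D ((\<lambda>w. (\<theta> + \<phi> w, w)) v) (\<phi>' * y, y))) (at v within {0..1})"
    by (rule has_derivative_in_compose2[where t="UNIV \<times> {0..1}", OF _ _ v f]) (use D in auto)
  moreover have lin: "linear (D (\<theta> + \<phi> v, v))"
  proof -
    have "(\<theta> + \<phi> v, v) \<in> UNIV \<times> {0..1}" using v by simp
    from has_derivative_linear[OF D[rule_format, OF this]] show ?thesis .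
  qed
  moreover have "D (\<theta> + \<phi> v, v) (\<phi>' * y, y) = y *\<^sub>R (\<phi>' *\<^sub>R D (\<theta> + \<phi> v, v) (1,0) + D (\<theta> + \<phi> v, v) (0,1))" for y :: real
  proof -
    have "(\<phi>' * y, y) = (\<phi>' * y) *\<^sub>R (1,0) + y *\<^sub>R (0::real,1::real)"
      by simp
    then have "D (\<theta> + \<phi> v, v) (\<phi>' * y, y) = (\<phi>' * y) *\<^sub>R D (\<theta> + \<phi> v, v) (1,0) + y *\<^sub>R D (\<theta> + \<phi> v, v) (0,1)"
      by (simp only: linear_add[OF lin] linear_cmul[OF lin])
    then show ?thesis by (simp only: scaleR_add_right scaleR_scaleR mult.commute)
  qed
  ultimately have "((\<lambda>w. C (\<theta> + \<phi> w) w) has_derivative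
     (\<lambda>y. y *\<^sub>R (\<phi>' *\<^sub>R D (\<theta> + \<phi> v, v) (1,0) + D (\<theta> + \<phi> v, v) (0,1)))) (at v within {0..1})"
    by simp
  then show ?thesis by (simp add: has_vector_derivative_def)
qed

lemma vd_theta:
  fixes C :: "real \<Rightarrow> real \<Rightarrow> 'a::real_normed_vector"
  assumes D: "\<forall>p \<in> UNIV \<times> {0..1}. ((\<lambda>q. C (fst q) (snd q)) has_derivative D p) (at p within UNIV \<times> {0..1})"
  and v: "v \<in> {0..1}"
  shows "((\<lambda>s. C (s + c) v) has_vector_derivative D (\<theta> + c, v) (1,0)) (at \<theta>)"
proof -
  have f: "((\<lambda>s. (s + c, v)) has_derivative (\<lambda>y. (y, 0))) (at \<theta> within UNIV)"
    by (auto intro!: derivative_eq_intros)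
  have "((\<lambda>s. (\<lambda>q. C (fst q) (snd q)) ((\<lambda>s. (s + c, v)) s)) has_derivative
     (\<lambda>y. D ((\<lambda>s. (s + c, v)) \<theta>) (y, 0))) (at \<theta> within UNIV)"
    by (rule has_derivative_in_compose2[where t="UNIV \<times> {0..1}", OF _ _ _ f]) (use D v in auto)
  moreover have lin: "linear (D (\<theta> + c, v))"
  proof -
    have "(\<theta> + c, v) \<in> UNIV \<times> {0..1}" using v by simp
    from has_derivative_linear[OF D[rule_format, OF this]] show ?thesis .
  qed
  moreover have "(\<lambda>y. D (\<theta> + c, v) (y, 0)) = (\<lambda>y. y *\<^sub>R D (\<theta> + c, v) (1,0))"
  proof
    fix y :: real
    have "(y, 0) = y *\<^sub>R (1::real,0::real)" by simp
    then show "D (\<theta> + c, v) (y, 0) = y *\<^sub>R D (\<theta> + c, v) (1,0)" by (simp only: linear_cmul[OF lin])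
  qed
  ultimately have "((\<lambda>s. C (s + c) v) has_derivative
     (\<lambda>y. y *\<^sub>R D (\<theta> + c, v) (1,0))) (at \<theta>)"
    by simp
  then show ?thesis by (simp add: has_vector_derivative_def)
qed

theorem mainTheorem5:
  fixes C :: "real \<Rightarrow> real \<Rightarrow> real ^ 'n" and l :: "real \<Rightarrow> real"
  assumes C1: "C1_cyl C"
    and l_cont: "continuous_on {0..1} l"
    and l_pos: "\<forall>v \<in> {0..1}. l v > 0"
    and speed: "\<forall>\<theta>. \<forall>v \<in> {0..1}. norm (dtheta C \<theta> v) = l v"
  defines "f \<equiv> (\<lambda>\<theta> v. inner (unit_tangent C \<theta> v) (dv C \<theta> v))"
  shows "(INF \<phi> \<in> {\<phi>. C1_interval \<phi>}.
            integral ({0..2 * pi} \<times> {0..1})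
              (\<lambda>(\<theta>, v). (norm (projT (unit_tangent (\<lambda>s w. C (s + \<phi> w) w) \<theta> v)
                                      (dv (\<lambda>s w. C (s + \<phi> w) w) \<theta> v)))\<^sup>2))
         = integral {0..1} (\<lambda>v. integral {0..2 * pi}
              (\<lambda>\<theta>. (f \<theta> v - (1 / (2 * pi)) * integral {0..2 * pi} (\<lambda>s. f s v))\<^sup>2))"
proof -
  from C1 obtain D where per: "\<And>\<theta> v. C (\<theta> + 2 * pi) v = C \<theta> v"
    and D: "\<forall>p \<in> UNIV \<times> {0..1}. ((\<lambda>q. C (fst q) (snd q)) has_derivative D p) (at p within UNIV \<times> {0..1})"
    and cT: "continuous_on (UNIV \<times> {0..1}) (\<lambda>p. D p (1, 0))"
    and cV: "continuous_on (UNIV \<times> {0..1}) (\<lambda>p. D p (0, 1))"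
    unfolding C1_cyl_def by blast
  have dth: "dtheta (\<lambda>s w. C (s + c) w) \<theta> v = D (\<theta> + c, v) (1,0)" if "v \<in> {0..1}" for c \<theta> v
    unfolding dtheta_def using vd_theta[OF D that, of c \<theta>] by (simp add: vector_derivative_at)
  have dthphi: "dtheta (\<lambda>s w. C (s + \<phi> w) w) \<theta> v = D (\<theta> + \<phi> v, v) (1,0)" if "v \<in> {0..1}" for \<phi> \<theta> v
    unfolding dtheta_def using vd_theta[OF D that, of "\<phi> v" \<theta>] by (simp add: vector_derivative_at)
  have dth0: "dtheta C \<theta> v = D (\<theta>, v) (1,0)" if "v \<in> {0..1}" for \<theta> v
    using dth[OF that, of 0 \<theta>] by simp
  have dvphi: "dv (\<lambda>s w. C (s + \<phi> w) w) \<theta> v = \<phi>' *\<^sub>R D (\<theta> + \<phi> v, v) (1,0) + D (\<theta> + \<phi> v, v) (0,1)"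
    if "v \<in> {0..1}" "(\<phi> has_real_derivative \<phi>') (at v within {0..1})" for \<phi> \<phi>' \<theta> v
  proof -
    have "vector_derivative (\<lambda>w. C (\<theta> + \<phi> w) w) (at v within cbox 0 1) = \<phi>' *\<^sub>R D (\<theta> + \<phi> v, v) (1,0) + D (\<theta> + \<phi> v, v) (0,1)"
      by (rule vector_derivative_within_cbox) (use vd_comp[OF D that] that in auto)
    then show ?thesis by (simp add: dv_def cbox_interval)
  qed
  have dv0: "dv C \<theta> v = D (\<theta>, v) (0,1)" if "v \<in> {0..1}" for \<theta> v
    using dvphi[OF that, of "\<lambda>_. 0" 0 \<theta>] by simp
  have nD: "norm (D (\<theta>, v) (1,0)) = l v" if "v \<in> {0..1}" for \<theta> v
    using speed that dth0 by auto
  have lpos: "l v > 0" if "v \<in> {0..1}" for v using l_pos that by auto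
  define fp where "fp = (\<lambda>p. (1 / l (snd p)) * inner (D p (1,0)) (D p (0,1)))"
  have fq: "f \<theta> v = fp (\<theta>, v)" if "v \<in> {0..1}" for \<theta> v
    using that by (simp add: f_def unit_tangent_def dth0 dv0 nD fp_def)
  have lsnd: "continuous_on (UNIV \<times> {0..1}) (\<lambda>p. l (snd p))"
    by (rule continuous_on_compose2[OF l_cont continuous_on_snd]) auto
  have fp_cont: "continuous_on (UNIV \<times> {0..1}) fp"
    unfolding fp_def
  proof (intro continuous_on_mult continuous_on_divide continuous_on_inner cT cV lsnd continuous_on_const ballI)
    fix p :: "real \<times> real" assume "p \<in> UNIV \<times> {0..1}"
    then show "l (snd p) \<noteq> 0" using lpos[of "snd p"] by auto
  qed
  have Dper1: "D (\<theta> + 2*pi, v) (1,0) = D (\<theta>, v) (1,0)" if "v \<in> {0..1}" for \<theta> v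
  proof -
    have "(\<lambda>s w. C (s + 2*pi) w) = C" using per by auto
    then show ?thesis using dth[OF that, of "2*pi" \<theta>] dth0[OF that, of \<theta>] by simp
  qed
  have Dper2: "D (\<theta> + 2*pi, v) (0,1) = D (\<theta>, v) (0,1)" if "v \<in> {0..1}" for \<theta> v
  proof -
    have "C (\<theta> + 2*pi) = C \<theta>" using per by auto
    then have "dv C (\<theta> + 2*pi) v = dv C \<theta> v" by (simp add: dv_def)
    then show ?thesis using dv0[OF that] by simp
  qed
  have fp_per: "fp (\<theta> + 2*pi, v) = fp (\<theta>, v)" if "v \<in> {0..1}" for \<theta> v
    using that by (simp add: fp_def Dper1 Dper2)
  define m where "m = (\<lambda>v. (1/(2*pi)) * integral {0..2*pi} (\<lambda>s. fp (s, v)))"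
  define V where "V = (\<lambda>v. integral {0..2*pi} (\<lambda>\<theta>. (fp (\<theta>, v) - m v)\<^sup>2))"
  have fpc2: "continuous_on ({0..1} \<times> cbox 0 (2*pi)) (\<lambda>p. fp (snd p, fst p))"
    by (rule continuous_on_compose2[OF fp_cont]) (auto intro!: continuous_intros)
  have m_cont: "continuous_on {0..1} m"
  proof -
    have "continuous_on {0..1} (\<lambda>v. integral (cbox 0 (2*pi)) (\<lambda>\<theta>. fp (\<theta>, v)))"
      by (rule integral_continuous_on_param) (use fpc2 in \<open>simp add: case_prod_beta'\<close>)
    then show ?thesis unfolding m_def by (intro continuous_intros) (simp add: cbox_interval)
  qed
  have V_cont: "continuous_on {0..1} V"
  proof -
    have mf: "continuous_on ({0..1} \<times> cbox 0 (2*pi)) (\<lambda>p. m (fst p))"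
      by (rule continuous_on_compose2[OF m_cont]) (auto intro!: continuous_intros)
    have "continuous_on {0..1} (\<lambda>v. integral (cbox 0 (2*pi)) (\<lambda>\<theta>. (fp (\<theta>, v) - m v)\<^sup>2))"
      by (rule integral_continuous_on_param) (use fpc2 mf in \<open>simp add: case_prod_beta' continuous_intros\<close>)
    then show ?thesis unfolding V_def by (simp add: cbox_interval)
  qed
  have key: "integral ({0..2 * pi} \<times> {0..1})
              (\<lambda>(\<theta>, v). (norm (projT (unit_tangent (\<lambda>s w. C (s + \<phi> w) w) \<theta> v)
                                      (dv (\<lambda>s w. C (s + \<phi> w) w) \<theta> v)))\<^sup>2)
     = integral {0..1} V + integral {0..1} (\<lambda>v. 2*pi*(\<phi>' v * l v + m v)\<^sup>2)"
    if phid: "\<forall>v\<in>{0..1}. (\<phi> has_real_derivative \<phi>' v) (at v within {0..1})"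
      and phic: "continuous_on {0..1} \<phi>'" for \<phi> \<phi>'
  proof -
    define a where "a = (\<lambda>v. \<phi>' v * l v)"
    have a_cont: "continuous_on {0..1} a" unfolding a_def by (intro continuous_intros phic l_cont)
    have phi_cont: "continuous_on {0..1} \<phi>" by (rule DERIV_continuous_on) (use phid in auto)
    have pt: "(norm (projT (unit_tangent (\<lambda>s w. C (s + \<phi> w) w) \<theta> v)
                 (dv (\<lambda>s w. C (s + \<phi> w) w) \<theta> v)))\<^sup>2 = (a v + fp (\<theta> + \<phi> v, v))\<^sup>2"
      if "v \<in> {0..1}" for \<theta> v
    proof -
      let ?p = "(\<theta> + \<phi> v, v)"
      have ut: "unit_tangent (\<lambda>s w. C (s + \<phi> w) w) \<theta> v = (1 / l v) *\<^sub>R D ?p (1,0)"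
        unfolding unit_tangent_def using dthphi[OF that, of \<phi> \<theta>] nD[OF that, of "\<theta> + \<phi> v"] by simp
      have dvv: "dv (\<lambda>s w. C (s + \<phi> w) w) \<theta> v = \<phi>' v *\<^sub>R D ?p (1,0) + D ?p (0,1)"
        using dvphi[OF that phid[rule_format, OF that]] .
      have nT: "norm ((1 / l v) *\<^sub>R D ?p (1,0)) = 1" using nD[OF that] lpos[OF that] by simp
      have ii: "inner (D ?p (1,0)) (D ?p (1,0)) = (l v)\<^sup>2"
        using nD[OF that, of "\<theta> + \<phi> v"] by (simp add: power2_norm_eq_inner[symmetric])
      have ip: "inner (\<phi>' v *\<^sub>R D ?p (1,0) + D ?p (0,1)) ((1 / l v) *\<^sub>R D ?p (1,0)) = a v + fp ?p"
        using lpos[OF that] ii by (simp add: a_def fp_def inner_add_left inner_add_right inner_commute field_simps power2_eq_square)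
      have "norm (inner (\<phi>' v *\<^sub>R D ?p (1,0) + D ?p (0,1)) ((1 / l v) *\<^sub>R D ?p (1,0)) *\<^sub>R ((1 / l v) *\<^sub>R D ?p (1,0)))
          = \<bar>a v + fp ?p\<bar>"
        unfolding norm_scaleR[of _ "(1 / l v) *\<^sub>R D ?p (1,0)"] nT ip by simp
      then show ?thesis unfolding ut dvv projT_def by simp
    qed
    define G where "G = (\<lambda>\<theta> v. (a v + fp (\<theta> + \<phi> v, v))\<^sup>2)"
    have Gc: "continuous_on (cbox (0,0) (2*pi,1)) (\<lambda>(\<theta>,v). G \<theta> v)"
    proof -
      have c1: "continuous_on (cbox (0::real,0::real) (2*pi,1)) (\<lambda>q. a (snd q))"
        by (rule continuous_on_compose2[OF a_cont]) (auto intro!: continuous_intros simp: cbox_Pair_eq)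
      have c2: "continuous_on (cbox (0::real,0::real) (2*pi,1)) (\<lambda>q. \<phi> (snd q))"
        by (rule continuous_on_compose2[OF phi_cont]) (auto intro!: continuous_intros simp: cbox_Pair_eq)
      have c3: "continuous_on (cbox (0,0) (2*pi,1)) (\<lambda>q. fp (fst q + \<phi> (snd q), snd q))"
      proof (rule continuous_on_compose2[OF fp_cont])
        show "continuous_on (cbox (0,0) (2*pi,1)) (\<lambda>q. (fst q + \<phi> (snd q), snd q))"
          using c2 by (intro continuous_intros) auto
      qed (auto simp: cbox_Pair_eq)
      show ?thesis unfolding G_def case_prod_beta' using c1 c3 by (intro continuous_intros)
    qed
    have box: "{0..2 * pi} \<times> {0..1} = cbox (0::real,0::real) (2*pi,1)" by (simp add: cbox_Pair_eq)
    have pv: "integral {0..2*pi} (\<lambda>\<theta>. G \<theta> v) = V v + 2*pi*(a v + m v)\<^sup>2" if v: "v \<in> {0..1}" for v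
    proof -
      have hc: "continuous_on UNIV (\<lambda>\<theta>. (a v + fp (\<theta>, v))\<^sup>2)"
      proof -
        have "continuous_on UNIV (\<lambda>\<theta>. fp (\<theta>, v))"
          by (rule continuous_on_compose2[OF fp_cont]) (use v in \<open>auto intro!: continuous_intros\<close>)
        then show ?thesis by (intro continuous_intros)
      qed
      have "integral {0..2*pi} (\<lambda>\<theta>. G \<theta> v) = integral {0..2*pi} (\<lambda>\<theta>. (a v + fp (\<theta>, v))\<^sup>2)"
        unfolding G_def using shift_integral[OF hc, of "\<phi> v"] fp_per[OF v] by simp
      also have "\<dots> = V v + 2*pi*(a v + m v)\<^sup>2"
      proof -
        have fc: "continuous_on {0..2*pi} (\<lambda>\<theta>. fp (\<theta>, v))"
          by (rule continuous_on_compose2[OF fp_cont]) (use v in \<open>auto intro!: continuous_intros\<close>)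
        have i0: "((\<lambda>\<theta>. fp (\<theta>, v)) has_integral (2*pi * m v)) {0..2*pi}"
          using integrable_integral[OF integrable_continuous_interval[OF fc]] by (simp add: m_def)
        have i1: "((\<lambda>\<theta>. fp (\<theta>, v) - m v) has_integral 0) {0..2*pi}"
          using has_integral_diff[OF i0 has_integral_const_real[of "m v" 0 "2*pi"]] by simp
        have i2: "((\<lambda>\<theta>. (fp (\<theta>, v) - m v)\<^sup>2) has_integral V v) {0..2*pi}"
          unfolding V_def by (intro integrable_integral integrable_continuous_interval continuous_intros fc)
        have i3: "((\<lambda>\<theta>. (fp (\<theta>, v) - m v)\<^sup>2 + (2*(a v + m v)) * (fp (\<theta>, v) - m v) + (a v + m v)\<^sup>2)
            has_integral (V v + (2*(a v + m v)) * 0 + 2*pi*(a v + m v)\<^sup>2)) {0..2*pi}"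
        proof -
          have i4: "((\<lambda>\<theta>. (a v + m v)\<^sup>2) has_integral (2*pi*(a v + m v)\<^sup>2)) {0..2*pi}"
            using has_integral_const_real[of "(a v + m v)\<^sup>2" 0 "2*pi"] by simp
          show ?thesis by (intro has_integral_add i2 has_integral_mult_right i1 i4)
        qed
        have eq: "(fp (\<theta>, v) - m v)\<^sup>2 + (2*(a v + m v)) * (fp (\<theta>, v) - m v) + (a v + m v)\<^sup>2
            = (a v + fp (\<theta>, v))\<^sup>2" for \<theta>
          by (simp add: power2_eq_square algebra_simps)
        show ?thesis using integral_unique[OF i3] unfolding eq by simp
      qed
      finally show ?thesis .
    qed
    have "integral ({0..2 * pi} \<times> {0..1})
              (\<lambda>(\<theta>, v). (norm (projT (unit_tangent (\<lambda>s w. C (s + \<phi> w) w) \<theta> v)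
                                      (dv (\<lambda>s w. C (s + \<phi> w) w) \<theta> v)))\<^sup>2)
        = integral (cbox (0,0) (2*pi,1)) (\<lambda>(\<theta>,v). G \<theta> v)"
      unfolding box[symmetric] by (rule Henstock_Kurzweil_Integration.integral_cong) (auto simp: pt G_def)
    also have "\<dots> = integral (cbox 0 (2*pi)) (\<lambda>\<theta>. integral (cbox 0 1) (\<lambda>v. G \<theta> v))"
      using integral_prod_continuous[OF Gc] by simp
    also have "\<dots> = integral (cbox 0 1) (\<lambda>v. integral (cbox 0 (2*pi)) (\<lambda>\<theta>. G \<theta> v))"
      by (rule integral_swap_continuous) (use Gc in simp)
    also have "\<dots> = integral {0..1} (\<lambda>v. V v + 2*pi*(a v + m v)\<^sup>2)"
      by (simp add: cbox_interval) (rule Henstock_Kurzweil_Integration.integral_cong, simp add: pv)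
    also have "\<dots> = integral {0..1} V + integral {0..1} (\<lambda>v. 2*pi*(a v + m v)\<^sup>2)"
      by (intro integral_add integrable_continuous_interval continuous_intros V_cont a_cont m_cont)
    finally show ?thesis by (simp add: a_def)
  qed
  let ?L = "\<lambda>\<phi>. integral ({0..2 * pi} \<times> {0..1})
              (\<lambda>(\<theta>, v). (norm (projT (unit_tangent (\<lambda>s w. C (s + \<phi> w) w) \<theta> v)
                                      (dv (\<lambda>s w. C (s + \<phi> w) w) \<theta> v)))\<^sup>2)"
  have rhs: "integral {0..1} (\<lambda>v. integral {0..2 * pi}
              (\<lambda>\<theta>. (f \<theta> v - (1 / (2 * pi)) * integral {0..2 * pi} (\<lambda>s. f s v))\<^sup>2)) = integral {0..1} V"
  proof (rule Henstock_Kurzweil_Integration.integral_cong)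
    fix v :: real assume v: "v \<in> {0..1}"
    have "integral {0..2 * pi} (\<lambda>s. f s v) = integral {0..2 * pi} (\<lambda>s. fp (s, v))"
      by (rule Henstock_Kurzweil_Integration.integral_cong) (simp add: fq[OF v])
    then show "integral {0..2 * pi}
              (\<lambda>\<theta>. (f \<theta> v - (1 / (2 * pi)) * integral {0..2 * pi} (\<lambda>s. f s v))\<^sup>2) = V v"
      unfolding V_def m_def by (intro Henstock_Kurzweil_Integration.integral_cong) (simp add: fq[OF v])
  qed
  define \<phi>0' where "\<phi>0' = (\<lambda>v. - m v / l v)"
  define \<phi>0 where "\<phi>0 = (\<lambda>v. integral {0..v} \<phi>0')"
  have c0: "continuous_on {0..1} \<phi>0'"
    unfolding \<phi>0'_def using lpos by (intro continuous_intros m_cont l_cont) force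
  have d0: "\<forall>v\<in>{0..1}. (\<phi>0 has_real_derivative \<phi>0' v) (at v within {0..1})"
    unfolding \<phi>0_def using integral_has_real_derivative[OF c0] by blast
  have C0: "C1_interval \<phi>0" unfolding C1_interval_def using d0 c0 by blast
  have val0: "?L \<phi>0 = integral {0..1} V"
  proof -
    have z: "2*pi*(\<phi>0' v * l v + m v)\<^sup>2 = 0" if "v \<in> {0..1}" for v
      using lpos[OF that] by (simp add: \<phi>0'_def)
    have "integral {0..1} (\<lambda>v. 2*pi*(\<phi>0' v * l v + m v)\<^sup>2) = 0"
      by (rule integral_unique, rule has_integral_is_0) (use z in blast)
    then show ?thesis using key[OF d0 c0] by simp
  qed
  have ge: "integral {0..1} V \<le> ?L \<phi>" if hphi: "C1_interval \<phi>" for \<phi>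
  proof -
    obtain \<phi>' where d: "\<forall>v\<in>{0..1}. (\<phi> has_real_derivative \<phi>' v) (at v within {0..1})"
      and c: "continuous_on {0..1} \<phi>'" using hphi unfolding C1_interval_def by blast
    have "0 \<le> integral {0..1} (\<lambda>v. 2*pi*(\<phi>' v * l v + m v)\<^sup>2)"
      by (intro integral_nonneg integrable_continuous_interval continuous_intros c l_cont m_cont) auto
    then show ?thesis using key[OF d c] by simp
  qed
  show ?thesis unfolding rhs
  proof (rule cInf_eq_minimum)
    show "integral {0..1} V \<in> ?L ` {\<phi>. C1_interval \<phi>}"
      using C0 val0 by (metis (mono_tags, lifting) image_eqI mem_Collect_eq)
  qed (use ge in auto)
qed

end
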